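(* For every natural number $T$, $$\int_GV_T(y)\,\gamma(dy,du)\le\int_Gk(y,u)\,\gamma(dy,du)\quad\text{for all }\gamma\in W,$$ and for every $\alpha\in(0,1)$, $$\int_Gh_\alpha(y)\,\gamma(dy,du)\le\int_Gk(y,u)\,\gamma(dy,du)\quad\text{for all }\gamma\in W.$$
   Context: Let $Y\subset\mathbb{R}^m$ be nonempty compact, $U_0$ a compact metric space, $U(\cdot):Y\rightsquigarrow U_0$ upper semicontinuous and compact-valued, and $f:\mathbb{R}^m\times U_0\to\mathbb{R}^m$, $k:\mathbb{R}^m\times U_0\to\mathbb{R}$ continuous. Put $A(y):=\{u\in U(y): f(y,u)\in Y\}$ and $G:=\{(y,u):y\in Y,\ u\in A(y)\}$. Standing assumption: $A(y)\ne\emptyset$ for all $y\in Y$. For $y_0\in Y$, an admissible process on $\{0,\dots,T-1\}$ (respectively on $\{0,1,\dots\}$) is a pair $(y(t),u(t))$ with $y(0)=y_0$, $u(t)\in A(y(t))$ and $y(t+1)=f(y(t),u(t))$. The controls of such processes form $\mathcal U_T(y_0)$ (respectively $\mathcal U(y_0)$). Value functions (these minima are attained and the functions are lower semicontinuous): $$V_T(y_0):=\frac1T\min_{u\in\mathcal U_T(y_0)}\sum_{t=0}^{T-1}k(y(t),u(t)),\qquad h_\alpha(y_0):=(1-\alpha)\min_{u\in\mathcal U(y_0)}\sum_{t=0}^\infty\alpha^tk(y(t),u(t)).$$ $\mathcal P(G)$ denotes the Borel probability measures on $G$, and $W:=\{\gamma\in\mathcal P(G):\int_G(\varphi(f(y,u))-\varphi(y))\,\gamma(dy,du)=0\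 \forall\varphi\in C(Y)\}$. *)

theory Defs
  imports "HOL-Probability.Probability"
begin

definition adm_set :: "('m \<Rightarrow> 'u set) \<Rightarrow> ('m \<Rightarrow> 'u \<Rightarrow> 'm) \<Rightarrow> 'm set \<Rightarrow> 'm \<Rightarrow> 'u set" where
  "adm_set U f Y y = {u \<in> U y. f y u \<in> Y}"

definition graph_G :: "('m \<Rightarrow> 'u set) \<Rightarrow> ('m \<Rightarrow> 'u \<Rightarrow> 'm) \<Rightarrow> 'm set \<Rightarrow> ('m \<times> 'u) set" where
  "graph_G U f Y = {(y, u). y \<in> Y \<and> u \<in> adm_set U f Y y}"

definition usc_on :: "'m::metric_space set \<Rightarrow> ('m \<Rightarrow> 'u::topological_space set) \<Rightarrow> bool" where
  "usc_on Y U \<longleftrightarrow> (\<forall>y\<in>Y. \<forall>V. open V \<and> U y \<subseteq> V \<longrightarrow>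
      (\<exists>e>0. \<forall>y'\<in>Y. dist y' y < e \<longrightarrow> U y' \<subseteq> V))"

definition V_T :: "('m \<Rightarrow> 'u set) \<Rightarrow> ('m \<Rightarrow> 'u \<Rightarrow> 'm) \<Rightarrow> ('m \<Rightarrow> 'u \<Rightarrow> real) \<Rightarrow> 'm set
    \<Rightarrow> nat \<Rightarrow> 'm \<Rightarrow> real" where
  "V_T U f k Y T y0 = (1 / real T) * Inf {(\<Sum>t<T. k (y t) (u t)) | y u.
      y 0 = y0 \<and> (\<forall>t<T. u t \<in> adm_set U f Y (y t) \<and> y (Suc t) = f (y t) (u t))}"

definition h_disc :: "('m \<Rightarrow> 'u set) \<Rightarrow> ('m \<Rightarrow> 'u \<Rightarrow> 'm) \<Rightarrow> ('m \<Rightarrow> 'u \<Rightarrow> real) \<Rightarrow> 'm set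
    \<Rightarrow> real \<Rightarrow> 'm \<Rightarrow> real" where
  "h_disc U f k Y \<alpha> y0 = (1 - \<alpha>) * Inf {(\<Sum>t. \<alpha> ^ t * k (y t) (u t)) | y u.
      y 0 = y0 \<and> (\<forall>t. u t \<in> adm_set U f Y (y t) \<and> y (Suc t) = f (y t) (u t))}"

definition prob_measures_on :: "('a::topological_space) set \<Rightarrow> 'a measure set" where
  "prob_measures_on G = {\<gamma>. prob_space \<gamma> \<and> space \<gamma> = G \<and> sets \<gamma> = sets (restrict_space borel G)}"

definition W_set :: "('m::topological_space \<Rightarrow> 'u::topological_space set) \<Rightarrow> ('m \<Rightarrow> 'u \<Rightarrow> 'm)
    \<Rightarrow> 'm set \<Rightarrow> ('m \<times> 'u) measure set" where
  "W_set U f Y = {\<gamma> \<in> prob_measures_on (graph_G U f Y).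
      \<forall>\<phi> :: 'm \<Rightarrow> real. continuous_on Y \<phi> \<longrightarrow>
        (\<integral>z. \<phi> (f (fst z) (snd z)) - \<phi> (fst z) \<partial>\<gamma>) = 0}"

end

theory Submission imports Defs "HOL-Analysis.Analysis" begin

primrec traj :: "('m \<Rightarrow> 'u) \<Rightarrow> ('m \<Rightarrow> 'u \<Rightarrow> 'm) \<Rightarrow> 'm \<Rightarrow> nat \<Rightarrow> 'm" where
  "traj c f y0 0 = y0"
| "traj c f y0 (Suc t) = f (traj c f y0 t) (c (traj c f y0 t))"

locale ctrl =
  fixes Y :: "'m::euclidean_space set"
    and U0 :: "'u::metric_space set"
    and U :: "'m \<Rightarrow> 'u set"
    and f :: "'m \<Rightarrow> 'u \<Rightarrow> 'm"
    and k :: "'m \<Rightarrow> 'u \<Rightarrow> real"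
  assumes Yne: "Y \<noteq> {}" and Ycomp: "compact Y"
    and U0comp: "compact U0"
    and Usub: "\<And>y. y \<in> Y \<Longrightarrow> U y \<subseteq> U0 \<and> compact (U y)"
    and Uusc: "usc_on Y U"
    and fcont: "continuous_on (UNIV \<times> U0) (\<lambda>(y, u). f y u)"
    and kcont: "continuous_on (UNIV \<times> U0) (\<lambda>(y, u). k y u)"
    and admne: "\<And>y. y \<in> Y \<Longrightarrow> adm_set U f Y y \<noteq> {}"
begin

definition "proc y0 = {(ys, us). ys 0 = y0 \<and> (\<forall>t. us t \<in> adm_set U f Y (ys t) \<and> ys (Suc t) = f (ys t) (us t))}"

definition "J w y0 = Inf {(\<Sum>t. w t * k (y t) (u t)) | y u.
      y 0 = y0 \<and> (\<forall>t. u t \<in> adm_set U f Y (y t) \<and> y (Suc t) = f (y t) (u t))}"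

lemma J_alt: "J w y0 = Inf ((\<lambda>(y,u). \<Sum>t. w t * k (y t) (u t)) ` proc y0)"
  unfolding J_def proc_def by (rule arg_cong[where f=Inf]) auto

lemma proc_in:
  assumes "(ys, us) \<in> proc y0" "y0 \<in> Y"
  shows "ys t \<in> Y \<and> us t \<in> U (ys t) \<and> us t \<in> U0"
proof -
  have "ys t \<in> Y" using assms by (induction t) (auto simp: proc_def adm_set_def)
  then show ?thesis using assms Usub unfolding proc_def adm_set_def by blast
qed

lemma kbound: obtains B where "B \<ge> 0" "\<And>y u. y \<in> Y \<Longrightarrow> u \<in> U0 \<Longrightarrow> \<bar>k y u\<bar> \<le> B"
proof -
  have "compact ((\<lambda>(y, u). k y u) ` (Y \<times> U0))"
    by (intro compact_continuous_image continuous_on_subset[OF kcont]) (auto intro: compact_Times Ycomp U0comp)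
  then obtain B where "\<forall>x\<in>(\<lambda>(y, u). k y u) ` (Y \<times> U0). norm x \<le> B"
    using compact_imp_bounded bounded_iff by blast
  then have "\<And>y u. y \<in> Y \<Longrightarrow> u \<in> U0 \<Longrightarrow> \<bar>k y u\<bar> \<le> max B 0" by fastforce
  then show ?thesis using that[of "max B 0"] by auto
qed

definition "B0 = (SOME B. B \<ge> 0 \<and> (\<forall>y u. y \<in> Y \<longrightarrow> u \<in> U0 \<longrightarrow> \<bar>k y u\<bar> \<le> B))"

lemma B0: "B0 \<ge> 0" "y \<in> Y \<Longrightarrow> u \<in> U0 \<Longrightarrow> \<bar>k y u\<bar> \<le> B0"
proof -
  obtain B where "B \<ge> 0 \<and> (\<forall>y u. y \<in> Y \<longrightarrow> u \<in> U0 \<longrightarrow> \<bar>k y u\<bar> \<le> B)" using kbound by metis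
  then have "B0 \<ge> 0 \<and> (\<forall>y u. y \<in> Y \<longrightarrow> u \<in> U0 \<longrightarrow> \<bar>k y u\<bar> \<le> B0)"
    unfolding B0_def by (rule someI)
  then show "B0 \<ge> 0" "y \<in> Y \<Longrightarrow> u \<in> U0 \<Longrightarrow> \<bar>k y u\<bar> \<le> B0" by auto
qed

definition "ch y = (SOME u. u \<in> adm_set U f Y y)"

lemma ch: "y \<in> Y \<Longrightarrow> ch y \<in> adm_set U f Y y"
  unfolding ch_def using admne by (simp add: some_in_eq)

lemma traj_in: "y0 \<in> Y \<Longrightarrow> traj ch f y0 t \<in> Y"
  by (induction t) (use ch in \<open>auto simp: adm_set_def\<close>)

lemma proc_ne: "y0 \<in> Y \<Longrightarrow> (traj ch f y0, \<lambda>t. ch (traj ch f y0 t)) \<in> proc y0"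
  unfolding proc_def using ch traj_in by auto

definition "cost w ys us = (\<Sum>t. w t * k (ys t) (us t))"

definition "wok w \<longleftrightarrow> (\<forall>t. 0 \<le> w t) \<and> summable w"

lemma cost_summ:
  assumes "wok w" "(ys, us) \<in> proc y0" "y0 \<in> Y"
  shows "summable (\<lambda>t. w t * k (ys t) (us t))" "\<bar>cost w ys us\<bar> \<le> B0 * suminf w"
proof -
  have b: "\<bar>w t * k (ys t) (us t)\<bar> \<le> B0 * w t" for t
    using assms proc_in[OF assms(2,3), of t] B0(2)[of "ys t" "us t"]
    by (auto simp: wok_def abs_mult mult.commute intro!: mult_left_mono)
  have sw: "summable (\<lambda>t. B0 * w t)" using assms(1) by (auto simp: wok_def intro: summable_mult)
  show s: "summable (\<lambda>t. w t * k (ys t) (us t))"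
    by (rule summable_comparison_test[OF _ sw]) (use b in auto)
  have "cost w ys us \<le> (\<Sum>t. B0 * w t)" unfolding cost_def
    by (rule suminf_le[OF _ s sw]) (use b abs_le_D1 in blast)
  moreover have "-(\<Sum>t. B0 * w t) \<le> cost w ys us"
  proof -
    have "(\<Sum>t. - (B0 * w t)) \<le> cost w ys us" unfolding cost_def
      by (rule suminf_le[OF _ summable_minus[OF sw] s]) (metis b abs_le_D2 minus_le_iff)
    then show ?thesis using suminf_minus[OF sw] by simp
  qed
  moreover have "(\<Sum>t. B0 * w t) = B0 * suminf w" using assms(1) by (auto simp: wok_def intro: suminf_mult)
  ultimately show "\<bar>cost w ys us\<bar> \<le> B0 * suminf w" by auto
qed

lemma J_cost: "J w y0 = Inf ((\<lambda>(y,u). cost w y u) ` proc y0)"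
  unfolding J_alt cost_def ..

lemma J_props:
  assumes "wok w" "y0 \<in> Y"
  shows "\<And>ys us. (ys, us) \<in> proc y0 \<Longrightarrow> J w y0 \<le> cost w ys us"
    and "\<bar>J w y0\<bar> \<le> B0 * suminf w"
    and "\<And>e. e > 0 \<Longrightarrow> \<exists>ys us. (ys, us) \<in> proc y0 \<and> cost w ys us < J w y0 + e"
proof -
  let ?S = "(\<lambda>(y,u). cost w y u) ` proc y0"
  have ne: "?S \<noteq> {}" using proc_ne[OF assms(2)] by auto
  have bd: "\<And>x. x \<in> ?S \<Longrightarrow> \<bar>x\<bar> \<le> B0 * suminf w" using cost_summ(2)[OF assms(1) _ assms(2)] by auto
  have bdd: "bdd_below ?S" by (rule bdd_belowI[of _ "- (B0 * suminf w)"]) (metis bd abs_le_D2 minus_le_iff)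
  show "\<And>ys us. (ys, us) \<in> proc y0 \<Longrightarrow> J w y0 \<le> cost w ys us"
    unfolding J_cost by (rule cInf_lower[OF _ bdd]) auto
  have "- (B0 * suminf w) \<le> J w y0" unfolding J_cost
    by (rule cInf_greatest[OF ne], metis bd abs_le_D2 minus_le_iff)
  moreover obtain x where "x \<in> ?S" using ne by blast
  moreover have "J w y0 \<le> x" if "x \<in> ?S" for x unfolding J_cost by (rule cInf_lower[OF that bdd])
  ultimately show "\<bar>J w y0\<bar> \<le> B0 * suminf w" using bd by (force simp: abs_le_iff)
  fix e :: real assume "e > 0"
  then have "Inf ?S < J w y0 + e" unfolding J_cost by simp
  from cInf_lessD[OF ne this] show "\<exists>ys us. (ys, us) \<in> proc y0 \<and> cost w ys us < J w y0 + e" by auto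
qed

lemma bellman:
  assumes w: "wok w" and w': "wok w'" and c: "c \<ge> 0" and ws: "\<And>t. w (Suc t) = c * w' t"
    and y: "y \<in> Y" and u: "u \<in> adm_set U f Y y"
  shows "J w y \<le> w 0 * k y u + c * J w' (f y u)"
proof -
  have y1: "f y u \<in> Y" using u by (auto simp: adm_set_def)
  have key: "J w y \<le> w 0 * k y u + c * cost w' ys us" if p: "(ys, us) \<in> proc (f y u)" for ys us
  proof -
    let ?ys = "case_nat y ys" and ?us = "case_nat u us"
    have p': "(?ys, ?us) \<in> proc y"
      using p u unfolding proc_def by (auto split: nat.splits)
    have s: "summable (\<lambda>t. w t * k (?ys t) (?us t))" by (rule cost_summ(1)[OF w p' y])
    have s': "summable (\<lambda>t. w' t * k (ys t) (us t))" by (rule cost_summ(1)[OF w' p y1])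
    have "cost w ?ys ?us = w 0 * k y u + (\<Sum>t. w (Suc t) * k (ys t) (us t))"
      unfolding cost_def using suminf_split_head[OF s] by simp
    also have "(\<Sum>t. w (Suc t) * k (ys t) (us t)) = c * cost w' ys us"
      unfolding cost_def ws using suminf_mult[OF s', of c] by (simp add: mult.assoc)
    finally show ?thesis using J_props(1)[OF w y p'] by simp
  qed
  show ?thesis
  proof (cases "c = 0")
    case True
    then show ?thesis using key[OF proc_ne[OF y1]] by simp
  next
    case False
    then have cp: "c > 0" using c by simp
    have "(J w y - w 0 * k y u) / c \<le> J w' (f y u)" unfolding J_cost[of w']
      by (rule cInf_greatest) (use proc_ne[OF y1] key cp in \<open>fastforce simp: divide_le_eq mult.commute\<close>)+
    then show ?thesis using cp by (simp add: divide_le_eq mult.commute)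
  qed
qed

lemma closed_graph:
  assumes yn: "yn \<longlonglongrightarrow> y" and un: "un \<longlonglongrightarrow> u" and inY: "\<And>n. yn n \<in> Y" and y: "y \<in> Y"
    and inU: "\<And>n. un n \<in> U (yn n)"
  shows "u \<in> U y"
proof (rule ccontr)
  assume nu: "u \<notin> U y"
  have usc: "\<And>V. open V \<Longrightarrow> U y \<subseteq> V \<Longrightarrow> \<exists>e>0. \<forall>y'\<in>Y. dist y' y < e \<longrightarrow> U y' \<subseteq> V"
    using Uusc y unfolding usc_on_def by blast
  have ev: "eventually (\<lambda>n. un n \<in> V) sequentially" if V: "open V" "U y \<subseteq> V" for V
  proof -
    obtain e where e: "e > 0" "\<forall>y'\<in>Y. dist y' y < e \<longrightarrow> U y' \<subseteq> V" using usc[OF V] by blast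
    have "eventually (\<lambda>n. dist (yn n) y < e) sequentially" using tendstoD[OF yn e(1)] .
    then show ?thesis by eventually_elim (use e inY inU in blast)
  qed
  show False
  proof (cases "U y = {}")
    case True
    have "eventually (\<lambda>n. un n \<in> {}) sequentially" by (rule ev) (use True in auto)
    then show False by simp
  next
    case False
    have cl: "closed (U y)" using Usub[OF y] compact_imp_closed by blast
    define d where "d = infdist u (U y)"
    have dpos: "d > 0" using in_closed_iff_infdist_zero[OF cl False, of u] nu infdist_nonneg[of u "U y"]
      unfolding d_def by linarith
    have "eventually (\<lambda>n. un n \<in> {x. infdist x (U y) < d/2}) sequentially"
      by (rule ev) (auto simp: dpos intro!: open_Collect_less continuous_intros)
    then have e2: "eventually (\<lambda>n. infdist (un n) (U y) \<le> d/2) sequentially"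
      by (auto elim: eventually_mono)
    have "(\<lambda>n. infdist (un n) (U y)) \<longlonglongrightarrow> d" unfolding d_def by (intro tendsto_intros un)
    from tendsto_le[OF _ tendsto_const this e2] have "d \<le> d/2" by simp
    then show False using dpos by simp
  qed
qed

lemma compact_K: "compact (Pi UNIV (\<lambda>_::nat. Y \<times> U0))"
proof -
  have "compactin (product_topology (\<lambda>_::nat. euclidean) UNIV) (PiE UNIV (\<lambda>_::nat. Y \<times> U0))"
    by (subst compactin_PiE) (auto intro: compact_Times Ycomp U0comp)
  then show ?thesis by (metis euclidean_product_topology compactin_euclidean_iff PiE_UNIV_domain)
qed

lemma extract_sub:
  assumes xs: "\<And>n. xs n \<in> Y" "xs \<longlonglongrightarrow> x" "x \<in> Y" and p: "\<And>n. (ys n, us n) \<in> proc (xs n)"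
  shows "\<exists>r ys0 us0. strict_mono r \<and> (ys0, us0) \<in> proc x \<and> (\<forall>t. (\<lambda>n. ys (r n) t) \<longlonglongrightarrow> ys0 t)
      \<and> (\<forall>t. (\<lambda>n. us (r n) t) \<longlonglongrightarrow> us0 t)"
proof -
  define Z where "Z n = (\<lambda>t. (ys n t, us n t))" for n
  have "\<forall>n. Z n \<in> Pi UNIV (\<lambda>_::nat. Y \<times> U0)"
    using proc_in[OF p xs(1)] unfolding Z_def by auto
  from seq_compactE[OF compact_imp_seq_compact[OF compact_K] this]
  obtain l r where l: "l \<in> Pi UNIV (\<lambda>_::nat. Y \<times> U0)" "strict_mono r" "(Z \<circ> r) \<longlonglongrightarrow> l" by blast
  have co: "(\<lambda>n. Z (r n) t) \<longlonglongrightarrow> l t" for t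
    using continuous_on_tendsto_compose[OF continuous_on_product_coordinates[of t] l(3)] by (simp add: o_def)
  define ys0 where "ys0 t = fst (l t)" for t
  define us0 where "us0 t = snd (l t)" for t
  have cy: "(\<lambda>n. ys (r n) t) \<longlonglongrightarrow> ys0 t" for t using tendsto_fst[OF co[of t]] by (simp add: Z_def ys0_def)
  have cu: "(\<lambda>n. us (r n) t) \<longlonglongrightarrow> us0 t" for t using tendsto_snd[OF co[of t]] by (simp add: Z_def us0_def)
  have inY: "ys0 t \<in> Y" "us0 t \<in> U0" for t
  proof -
    have "l t \<in> Y \<times> U0" using l(1) by auto
    then show "ys0 t \<in> Y" "us0 t \<in> U0" by (auto simp: ys0_def us0_def mem_Times_iff)
  qed
  have "(ys0, us0) \<in> proc x"
    unfolding proc_def adm_set_def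
  proof (clarsimp, intro conjI allI)
    have "(\<lambda>n. ys (r n) 0) \<longlonglongrightarrow> x" using p LIMSEQ_subseq_LIMSEQ[OF xs(2) l(2)] by (simp add: proc_def o_def)
    then show "ys0 0 = x" using cy[of 0] LIMSEQ_unique by blast
  next
    fix t
    have fc: "(\<lambda>n. f (ys (r n) t) (us (r n) t)) \<longlonglongrightarrow> f (ys0 t) (us0 t)"
      using continuous_on_tendsto_compose[OF fcont tendsto_Pair[OF cy[of t] cu[of t]]] inY proc_in[OF p xs(1)]
      by auto
    moreover have "(\<lambda>n. f (ys (r n) t) (us (r n) t)) = (\<lambda>n. ys (r n) (Suc t))"
      using p by (auto simp: proc_def)
    ultimately show "ys0 (Suc t) = f (ys0 t) (us0 t)" using cy[of "Suc t"] LIMSEQ_unique by metis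
    then show "f (ys0 t) (us0 t) \<in> Y" using inY(1)[of "Suc t"] by simp
    show "us0 t \<in> U (ys0 t)"
      by (rule closed_graph[OF cy cu]) (use proc_in[OF p xs(1)] inY in auto)
  qed
  then show ?thesis using l(2) cy cu by blast
qed

lemma J_lsc:
  assumes w: "wok w"
  shows "closed {x \<in> Y. J w x \<le> a}"
  unfolding closed_sequential_limits
proof (intro allI impI, elim conjE)
  fix xs x assume xsS: "\<forall>n. xs n \<in> {x \<in> Y. J w x \<le> a}" and lim: "xs \<longlonglongrightarrow> x"
  have xsY: "\<And>n. xs n \<in> Y" and Ja: "\<And>n. J w (xs n) \<le> a" using xsS by auto
  have xY: "x \<in> Y" using closed_sequentially[OF compact_imp_closed[OF Ycomp] _ lim] xsY by blast
  have "\<forall>n. \<exists>p. p \<in> proc (xs n) \<and> cost w (fst p) (snd p) < J w (xs n) + inverse (real (Suc n))"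
    using J_props(3)[OF w xsY] by fastforce
  then obtain P where P: "\<And>n. P n \<in> proc (xs n)" "\<And>n. cost w (fst (P n)) (snd (P n)) < J w (xs n) + inverse (real (Suc n))"
    by metis
  define ys where "ys n = fst (P n)" for n
  define us where "us n = snd (P n)" for n
  have p: "(ys n, us n) \<in> proc (xs n)" for n using P(1) by (simp add: ys_def us_def)
  obtain r ys0 us0 where r: "strict_mono r" "(ys0, us0) \<in> proc x" "\<And>t. (\<lambda>n. ys (r n) t) \<longlonglongrightarrow> ys0 t"
    "\<And>t. (\<lambda>n. us (r n) t) \<longlonglongrightarrow> us0 t"
    using extract_sub[OF xsY lim xY p] by blast
  have lk: "(\<lambda>n. w t * k (ys (r n) t) (us (r n) t)) \<longlonglongrightarrow> w t * k (ys0 t) (us0 t)" for t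
  proof -
    have "(\<lambda>n. (\<lambda>(y, u). k y u) (ys (r n) t, us (r n) t)) \<longlonglongrightarrow> (\<lambda>(y, u). k y u) (ys0 t, us0 t)"
      by (rule continuous_on_tendsto_compose[OF kcont tendsto_Pair[OF r(3) r(4)]])
         (use proc_in[OF r(2) xY] proc_in[OF p xsY] in auto)
    then show ?thesis by (intro tendsto_mult_left) simp
  qed
  have bd: "norm (w t * k (ys (r n) t) (us (r n) t)) \<le> w t * B0" for t n
    using w proc_in[OF p xsY, of "r n" t] B0(2)[of "ys (r n) t" "us (r n) t"]
    by (auto simp: wok_def abs_mult intro!: mult_left_mono)
  have sM: "summable (\<lambda>t. w t * B0)" using w by (auto simp: wok_def intro: summable_mult2)
  have c: "(\<lambda>n. cost w (ys (r n)) (us (r n))) \<longlonglongrightarrow> cost w ys0 us0"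
    unfolding cost_def
    by (rule tannerys_theorem[where a="\<lambda>t n. w t * k (ys (r n) t) (us (r n) t)"
        and b = "\<lambda>t. w t * k (ys0 t) (us0 t)" and M = "\<lambda>t. w t * B0" and F=sequentially, THEN conjunct2, THEN conjunct2])
       (use lk bd sM in \<open>auto intro: always_eventually\<close>)
  have "(\<lambda>n. a + inverse (real (Suc (r n)))) \<longlonglongrightarrow> a + 0"
    using LIMSEQ_subseq_LIMSEQ[OF LIMSEQ_inverse_real_of_nat r(1)] by (intro tendsto_add tendsto_const) (simp add: o_def)
  moreover have "cost w (ys (r n)) (us (r n)) \<le> a + inverse (real (Suc (r n)))" for n
    using P(2)[of "r n"] Ja[of "r n"] by (simp add: ys_def us_def)
  ultimately have "cost w ys0 us0 \<le> a" using c by (intro LIMSEQ_le) auto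
  then show "x \<in> {x \<in> Y. J w x \<le> a}" using J_props(1)[OF w xY r(2)] xY by simp
qed

definition "Jx w x = (if x \<in> Y then J w x else 0)"

lemma Jx_meas: assumes w: "wok w" shows "Jx w \<in> borel_measurable borel"
  unfolding borel_measurable_iff_le
proof
  fix a :: real
  have cl: "closed {x \<in> Y. J w x \<le> a}" by (rule J_lsc[OF w])
  have oY: "open (- Y)" using compact_imp_closed[OF Ycomp] by auto
  have "{x \<in> space borel. Jx w x \<le> a} = {x \<in> Y. J w x \<le> a} \<union> (if 0 \<le> a then - Y else {})"
    by (auto simp: Jx_def)
  also have "\<dots> \<in> sets borel" using cl oY by auto
  finally show "{x \<in> space borel. Jx w x \<le> a} \<in> sets borel" .
qed

lemma Jx_bound: assumes w: "wok w" shows "\<bar>Jx w x\<bar> \<le> B0 * suminf w"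
  using J_props(2)[OF w] B0(1) w by (auto simp: Jx_def wok_def intro!: mult_nonneg_nonneg suminf_nonneg)

lemma G_sub: "graph_G U f Y \<subseteq> Y \<times> U0"
  using Usub by (auto simp: graph_G_def adm_set_def)

lemma G_props:
  assumes "\<gamma> \<in> W_set U f Y"
  shows "prob_space \<gamma>" "space \<gamma> = graph_G U f Y" "sets \<gamma> = sets (restrict_space borel (graph_G U f Y))"
    "\<And>\<phi>::'m \<Rightarrow> real. continuous_on Y \<phi> \<Longrightarrow> (\<integral>z. \<phi> (f (fst z) (snd z)) - \<phi> (fst z) \<partial>\<gamma>) = 0"
  using assms unfolding W_set_def prob_measures_on_def by auto

lemma G_meas:
  fixes h :: "'m \<times> 'u \<Rightarrow> 'b::topological_space"
  assumes "\<gamma> \<in> W_set U f Y" "continuous_on (graph_G U f Y) h"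
  shows "h \<in> borel_measurable \<gamma>"
proof -
  have "measurable \<gamma> (borel :: 'b measure) = measurable (restrict_space borel (graph_G U f Y)) borel"
    by (rule measurable_cong_sets) (use G_props[OF assms(1)] in auto)
  then show ?thesis using borel_measurable_continuous_on_restrict[OF assms(2)] by simp
qed

lemma contF: "continuous_on (graph_G U f Y) (\<lambda>z. f (fst z) (snd z))"
  using continuous_on_subset[OF fcont] G_sub by (auto simp: case_prod_beta)

lemma contk: "continuous_on (graph_G U f Y) (\<lambda>z. k (fst z) (snd z))"
  using continuous_on_subset[OF kcont] G_sub by (auto simp: case_prod_beta)

lemma phi_lim:
  assumes "closed C" "C \<noteq> {}"
  shows "(\<lambda>n. max 0 (1 - real n * infdist x C)) \<longlonglongrightarrow> indicator C x"
proof (cases "x \<in> C")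
  case True
  then show ?thesis by simp
next
  case False
  have d: "infdist x C > 0" using in_closed_iff_infdist_zero[OF assms, of x] False infdist_nonneg[of x C] by linarith
  obtain N where N: "inverse (infdist x C) < real N" using reals_Archimedean2 by blast
  have "eventually (\<lambda>n. max 0 (1 - real n * infdist x C) = indicator C x) sequentially"
    unfolding eventually_sequentially
  proof (intro exI allI impI)
    fix n assume "N \<le> n"
    then have "inverse (infdist x C) < real n" using N by linarith
    then have "1 < real n * infdist x C" using d by (simp add: field_simps)
    then show "max 0 (1 - real n * infdist x C) = indicator C x" using False by simp
  qed
  then show ?thesis by (rule tendsto_eventually)
qed

lemma invariance:
  assumes g: "\<gamma> \<in> W_set U f Y" and gm: "(h :: 'm \<Rightarrow> real) \<in> borel_measurable borel"
  shows "(\<integral>z. h (f (fst z) (snd z)) \<partial>\<gamma>) = (\<integral>z. h (fst z) \<partial>\<gamma>)"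
proof -
  interpret P: prob_space \<gamma> using G_props[OF g] by simp
  define F where "F z = f (fst z) (snd z)" for z
  have mF: "F \<in> measurable \<gamma> borel" unfolding F_def by (rule G_meas[OF g contF])
  have mfst: "fst \<in> measurable \<gamma> borel" by (rule G_meas[OF g]) (intro continuous_intros)
  define M1 where "M1 = distr \<gamma> borel fst"
  define M2 where "M2 = distr \<gamma> borel F"
  interpret P1: prob_space M1 unfolding M1_def by (rule P.prob_space_distr[OF mfst])
  interpret P2: prob_space M2 unfolding M2_def by (rule P.prob_space_distr[OF mF])
  have eqint: "(\<integral>z. \<phi> (F z) \<partial>\<gamma>) = (\<integral>z. \<phi> (fst z) \<partial>\<gamma>)" if "continuous_on UNIV \<phi>" "\<And>x. \<bar>\<phi> x\<bar> \<le> 1"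
    for \<phi> :: "'m \<Rightarrow> real"
  proof -
    have m1: "(\<lambda>z. \<phi> (F z)) \<in> borel_measurable \<gamma>"
      using measurable_compose[OF mF borel_measurable_continuous_onI[OF that(1)]] by simp
    have m2: "(\<lambda>z. \<phi> (fst z)) \<in> borel_measurable \<gamma>"
      using measurable_compose[OF mfst borel_measurable_continuous_onI[OF that(1)]] by simp
    have i1: "integrable \<gamma> (\<lambda>z. \<phi> (F z))" by (rule P.integrable_const_bound[where B=1]) (use that m1 in auto)
    have i2: "integrable \<gamma> (\<lambda>z. \<phi> (fst z))" by (rule P.integrable_const_bound[where B=1]) (use that m2 in auto)
    have "(\<integral>z. \<phi> (F z) - \<phi> (fst z) \<partial>\<gamma>) = 0"
      unfolding F_def by (rule G_props(4)[OF g]) (rule continuous_on_subset[OF that(1)], simp)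
    then show ?thesis using Bochner_Integration.integral_diff[OF i1 i2] by simp
  qed
  have ind: "emeasure (distr \<gamma> borel T) C = ennreal (\<integral>z. indicator C (T z) \<partial>\<gamma>)"
    if T: "T \<in> measurable \<gamma> borel" and C: "closed C" for T :: "'m \<times> 'u \<Rightarrow> 'm" and C
  proof -
    interpret PT: prob_space "distr \<gamma> borel T" by (rule P.prob_space_distr[OF T])
    have "emeasure (distr \<gamma> borel T) C = ennreal (measure (distr \<gamma> borel T) C)"
      by (rule PT.emeasure_eq_measure)
    also have "measure (distr \<gamma> borel T) C = (\<integral>x. indicator C x \<partial>distr \<gamma> borel T)" by simp
    also have "\<dots> = (\<integral>z. indicator C (T z) \<partial>\<gamma>)"
      by (rule integral_distr[OF T]) (use C in auto)
    finally show ?thesis .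
  qed
  have lim: "(\<lambda>n. \<integral>z. max 0 (1 - real n * infdist (T z) C) \<partial>\<gamma>) \<longlonglongrightarrow> (\<integral>z. indicator C (T z) \<partial>\<gamma>)"
    if T: "T \<in> measurable \<gamma> borel" and C: "closed C" "C \<noteq> {}" for T :: "'m \<times> 'u \<Rightarrow> 'm" and C
  proof (rule integral_dominated_convergence[where w="\<lambda>_. 1"])
    show "(\<lambda>z. indicator C (T z) :: real) \<in> borel_measurable \<gamma>"
      using measurable_compose[OF T borel_measurable_indicator[of C borel]] C by auto
    show "(\<lambda>z. max 0 (1 - real n * infdist (T z) C)) \<in> borel_measurable \<gamma>" for n
    proof -
      have c: "continuous_on UNIV (\<lambda>x. max 0 (1 - real n * infdist x C))" by (intro continuous_intros)
      show ?thesis by (rule measurable_compose[OF T borel_measurable_continuous_onI[OF c]])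
    qed
    show "integrable \<gamma> (\<lambda>_. 1::real)" by simp
    show "AE z in \<gamma>. (\<lambda>n. max 0 (1 - real n * infdist (T z) C)) \<longlonglongrightarrow> indicator C (T z)"
      using phi_lim[OF C] by simp
    show "AE z in \<gamma>. norm (max 0 (1 - real n * infdist (T z) C)) \<le> 1" for n
      using infdist_nonneg[of _ C] by (auto intro!: AE_I2 simp: mult_nonneg_nonneg)
  qed
  have "M1 = M2"
  proof (rule measure_eqI_generator_eq[where \<Omega>=UNIV and E="Collect closed" and A="\<lambda>_. UNIV"])
    show "Int_stable (Collect closed)" by (auto simp: Int_stable_def)
    show "Collect closed \<subseteq> Pow UNIV" by simp
    show "sets M1 = sigma_sets UNIV (Collect closed)" "sets M2 = sigma_sets UNIV (Collect closed)"
      unfolding M1_def M2_def by (simp_all add: borel_eq_closed)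
    show "range (\<lambda>_. UNIV) \<subseteq> Collect closed" "(\<Union>i::nat. UNIV) = UNIV" by auto
    show "emeasure M1 UNIV \<noteq> \<infinity>" for i :: nat by simp
    fix C :: "'m set" assume "C \<in> Collect closed"
    then have C: "closed C" by simp
    show "emeasure M1 C = emeasure M2 C"
    proof (cases "C = {}")
      case True then show ?thesis by simp
    next
      case False
      have c1: "continuous_on UNIV (\<lambda>x. max 0 (1 - real n * infdist x C))" for n by (intro continuous_intros)
      have b1: "\<bar>max 0 (1 - real n * infdist x C)\<bar> \<le> 1" for n x
        using infdist_nonneg[of x C] by (auto simp: mult_nonneg_nonneg)
      have "(\<integral>z. (indicator C (F z) :: real) \<partial>\<gamma>) = (\<integral>z. indicator C (fst z) \<partial>\<gamma>)"
      proof -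
        have eq: "(\<lambda>n. \<integral>z. max 0 (1 - real n * infdist (F z) C) \<partial>\<gamma>) = (\<lambda>n. \<integral>z. max 0 (1 - real n * infdist (fst z) C) \<partial>\<gamma>)"
          by (rule ext, rule eqint[OF c1 b1])
        show ?thesis by (rule LIMSEQ_unique[OF lim[OF mF C False, unfolded eq] lim[OF mfst C False]])
      qed
      then show ?thesis unfolding M1_def M2_def using ind[OF mF C] ind[OF mfst C] by simp
    qed
  qed
  have "(\<integral>z. h (F z) \<partial>\<gamma>) = integral\<^sup>L M2 h" unfolding M2_def by (rule integral_distr[OF mF gm, symmetric])
  also have "\<dots> = integral\<^sup>L M1 h" using \<open>M1 = M2\<close> by simp
  also have "\<dots> = (\<integral>z. h (fst z) \<partial>\<gamma>)" unfolding M1_def by (rule integral_distr[OF mfst gm])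
  finally show ?thesis unfolding F_def .
qed

lemma int_bellman:
  assumes g: "\<gamma> \<in> W_set U f Y"
    and w: "wok w" and w': "wok w'" and c: "c \<ge> 0" and ws: "\<And>t. w (Suc t) = c * w' t"
  shows "(\<integral>z. Jx w (fst z) \<partial>\<gamma>) \<le> w 0 * (\<integral>z. k (fst z) (snd z) \<partial>\<gamma>) + c * (\<integral>z. Jx w' (fst z) \<partial>\<gamma>)"
proof -
  interpret P: prob_space \<gamma> using G_props[OF g] by simp
  have sp: "space \<gamma> = graph_G U f Y" using G_props[OF g] by simp
  have mF: "(\<lambda>z. f (fst z) (snd z)) \<in> measurable \<gamma> borel" by (rule G_meas[OF g contF])
  have mfst: "fst \<in> measurable \<gamma> borel" by (rule G_meas[OF g]) (intro continuous_intros)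
  have mk: "(\<lambda>z. k (fst z) (snd z)) \<in> borel_measurable \<gamma>" by (rule G_meas[OF g contk])
  have ik: "integrable \<gamma> (\<lambda>z. k (fst z) (snd z))"
    by (rule P.integrable_const_bound[where B=B0]) (use mk B0(2) G_sub in \<open>auto simp: sp intro!: AE_I2\<close>)
  have i1: "integrable \<gamma> (\<lambda>z. Jx w (fst z))"
    by (rule P.integrable_const_bound[where B="B0 * suminf w"])
       (use Jx_bound[OF w] measurable_compose[OF mfst Jx_meas[OF w]] in auto)
  have i2: "integrable \<gamma> (\<lambda>z. Jx w' (fst z))"
    by (rule P.integrable_const_bound[where B="B0 * suminf w'"])
       (use Jx_bound[OF w'] measurable_compose[OF mfst Jx_meas[OF w']] in auto)
  have i3: "integrable \<gamma> (\<lambda>z. Jx w' (f (fst z) (snd z)))"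
    by (rule P.integrable_const_bound[where B="B0 * suminf w'"])
       (use Jx_bound[OF w'] measurable_compose[OF mF Jx_meas[OF w']] in auto)
  have "(\<integral>z. Jx w (fst z) \<partial>\<gamma>) \<le> (\<integral>z. w 0 * k (fst z) (snd z) + c * Jx w' (f (fst z) (snd z)) \<partial>\<gamma>)"
  proof (rule integral_mono[OF i1])
    show "integrable \<gamma> (\<lambda>z. w 0 * k (fst z) (snd z) + c * Jx w' (f (fst z) (snd z)))"
      using ik i3 by auto
    fix z assume "z \<in> space \<gamma>"
    then have z: "fst z \<in> Y" "snd z \<in> adm_set U f Y (fst z)" by (auto simp: sp graph_G_def)
    then have "f (fst z) (snd z) \<in> Y" by (auto simp: adm_set_def)
    then show "Jx w (fst z) \<le> w 0 * k (fst z) (snd z) + c * Jx w' (f (fst z) (snd z))"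
      using bellman[OF w w' c ws z] z by (simp add: Jx_def)
  qed
  also have "\<dots> = w 0 * (\<integral>z. k (fst z) (snd z) \<partial>\<gamma>) + c * (\<integral>z. Jx w' (f (fst z) (snd z)) \<partial>\<gamma>)"
    using ik i3 by simp
  also have "(\<integral>z. Jx w' (f (fst z) (snd z)) \<partial>\<gamma>) = (\<integral>z. Jx w' (fst z) \<partial>\<gamma>)"
    by (rule invariance[OF g Jx_meas[OF w']])
  finally show ?thesis .
qed

definition "wT T = (\<lambda>t::nat. if t < T then 1 else (0::real))"

lemma wT_ok: "wok (wT T)"
  unfolding wok_def wT_def by (auto intro!: summable_finite[of "{..<T}"])

lemma Jx_w0: "Jx (wT 0) x = 0"
proof (cases "x \<in> Y")
  case True
  have "(\<lambda>(y,u). cost (wT 0) y u) ` proc x = {0}"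
    using proc_ne[OF True] by (auto simp: cost_def wT_def)
  then show ?thesis using True by (simp add: Jx_def J_cost)
qed (simp add: Jx_def)

lemma int_VT_aux:
  assumes g: "\<gamma> \<in> W_set U f Y"
  shows "(\<integral>z. Jx (wT T) (fst z) \<partial>\<gamma>) \<le> real T * (\<integral>z. k (fst z) (snd z) \<partial>\<gamma>)"
proof (induction T)
  case 0
  then show ?case by (simp add: Jx_w0)
next
  case (Suc T)
  have "(\<integral>z. Jx (wT (Suc T)) (fst z) \<partial>\<gamma>) \<le> wT (Suc T) 0 * (\<integral>z. k (fst z) (snd z) \<partial>\<gamma>) + 1 * (\<integral>z. Jx (wT T) (fst z) \<partial>\<gamma>)"
    by (rule int_bellman[OF g wT_ok wT_ok]) (auto simp: wT_def)
  then show ?case using Suc by (simp add: wT_def algebra_simps)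
qed

lemma VT_eq:
  assumes y0: "y0 \<in> Y"
  shows "V_T U f k Y T y0 = (1 / real T) * J (wT T) y0"
proof -
  have "{(\<Sum>t<T. k (y t) (u t)) | y u.
      y 0 = y0 \<and> (\<forall>t<T. u t \<in> adm_set U f Y (y t) \<and> y (Suc t) = f (y t) (u t))}
      = (\<lambda>(y,u). cost (wT T) y u) ` proc y0" (is "?A = ?B")
  proof
    have cs: "cost (wT T) y u = (\<Sum>t<T. k (y t) (u t))" for y u
      unfolding cost_def wT_def by (subst suminf_finite[of "{..<T}"]) auto
    show "?B \<subseteq> ?A" using cs by (force simp: proc_def)
    show "?A \<subseteq> ?B"
    proof
      fix x assume "x \<in> ?A"
      then obtain y u where x: "x = (\<Sum>t<T. k (y t) (u t))" and yu: "y 0 = y0"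
        "\<And>t. t < T \<Longrightarrow> u t \<in> adm_set U f Y (y t) \<and> y (Suc t) = f (y t) (u t)" by blast
      have yY: "t \<le> T \<Longrightarrow> y t \<in> Y" for t
      proof (induction t)
        case 0 then show ?case using yu y0 by simp
      next
        case (Suc t) then show ?case using yu(2)[of t] by (auto simp: adm_set_def)
      qed
      define ys where "ys = traj ch f (y T)"
      define us where "us = (\<lambda>t. ch (traj ch f (y T) t))"
      have pp: "(ys, us) \<in> proc (y T)" unfolding ys_def us_def by (rule proc_ne[OF yY]) simp
      define y' where "y' t = (if t \<le> T then y t else ys (t - T))" for t
      define u' where "u' t = (if t < T then u t else us (t - T))" for t
      have "(y', u') \<in> proc y0"
      proof -
        have "y' 0 = y0" using yu by (simp add: y'_def)
        moreover have "u' t \<in> adm_set U f Y (y' t) \<and> y' (Suc t) = f (y' t) (u' t)" for t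
        proof (cases "t < T")
          case True then show ?thesis using yu(2)[of t] by (simp add: y'_def u'_def)
        next
          case False
          then have e: "Suc t - T = Suc (t - T)" by simp
          have y'e: "y' t = ys (t - T)" using False pp by (cases "t = T") (auto simp: y'_def proc_def)
          show ?thesis using False pp e y'e unfolding proc_def by (auto simp: y'_def u'_def)
        qed
        ultimately show ?thesis unfolding proc_def by blast
      qed
      moreover have "cost (wT T) y' u' = x" unfolding cs x y'_def u'_def by simp
      ultimately show "x \<in> ?B" by force
    qed
  qed
  then show ?thesis unfolding V_T_def J_cost by simp
qed

lemma int_VT:
  assumes g: "\<gamma> \<in> W_set U f Y" and T: "T \<ge> 1"
  shows "(\<integral>z. V_T U f k Y T (fst z) \<partial>\<gamma>) \<le> (\<integral>z. k (fst z) (snd z) \<partial>\<gamma>)"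
proof -
  have sp: "space \<gamma> = graph_G U f Y" using G_props[OF g] by simp
  have "(\<integral>z. V_T U f k Y T (fst z) \<partial>\<gamma>) = (\<integral>z. (1 / real T) * Jx (wT T) (fst z) \<partial>\<gamma>)"
    by (rule Bochner_Integration.integral_cong) (auto simp: sp graph_G_def Jx_def VT_eq)
  also have "\<dots> = (1 / real T) * (\<integral>z. Jx (wT T) (fst z) \<partial>\<gamma>)" by simp
  also have "\<dots> \<le> (1 / real T) * (real T * (\<integral>z. k (fst z) (snd z) \<partial>\<gamma>))"
    by (rule mult_left_mono[OF int_VT_aux[OF g]]) simp
  also have "\<dots> = (\<integral>z. k (fst z) (snd z) \<partial>\<gamma>)" using T by simp
  finally show ?thesis .
qed

lemma int_h:
  assumes g: "\<gamma> \<in> W_set U f Y" and a: "0 < \<alpha>" "\<alpha> < 1"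
  shows "(\<integral>z. h_disc U f k Y \<alpha> (fst z) \<partial>\<gamma>) \<le> (\<integral>z. k (fst z) (snd z) \<partial>\<gamma>)"
proof -
  have sp: "space \<gamma> = graph_G U f Y" using G_props[OF g] by simp
  define w where "w = (\<lambda>t::nat. \<alpha> ^ t)"
  have w: "wok w" unfolding wok_def w_def using a by (auto intro!: summable_geometric)
  have hb: "h_disc U f k Y \<alpha> y = (1 - \<alpha>) * J w y" for y
    unfolding h_disc_def J_def w_def by simp
  have "(\<integral>z. h_disc U f k Y \<alpha> (fst z) \<partial>\<gamma>) = (\<integral>z. (1 - \<alpha>) * Jx w (fst z) \<partial>\<gamma>)"
    by (rule Bochner_Integration.integral_cong) (auto simp: sp graph_G_def Jx_def hb)
  also have "\<dots> = (1 - \<alpha>) * (\<integral>z. Jx w (fst z) \<partial>\<gamma>)" by simp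
  also have "\<dots> \<le> (\<integral>z. k (fst z) (snd z) \<partial>\<gamma>)"
  proof -
    have "(\<integral>z. Jx w (fst z) \<partial>\<gamma>) \<le> w 0 * (\<integral>z. k (fst z) (snd z) \<partial>\<gamma>) + \<alpha> * (\<integral>z. Jx w (fst z) \<partial>\<gamma>)"
      by (rule int_bellman[OF g w w]) (use a in \<open>auto simp: w_def\<close>)
    then show ?thesis by (simp add: w_def algebra_simps)
  qed
  finally show ?thesis .
qed

end

theorem lemma3p2:
  fixes Y :: "'m::euclidean_space set"
    and U0 :: "'u::metric_space set"
    and U :: "'m \<Rightarrow> 'u set"
    and f :: "'m \<Rightarrow> 'u \<Rightarrow> 'm"
    and k :: "'m \<Rightarrow> 'u \<Rightarrow> real"
  assumes "Y \<noteq> {}" and "compact Y"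
    and "compact U0"
    and "\<And>y. y \<in> Y \<Longrightarrow> U y \<subseteq> U0 \<and> compact (U y)"
    and "usc_on Y U"
    and "continuous_on (UNIV \<times> U0) (\<lambda>(y, u). f y u)"
    and "continuous_on (UNIV \<times> U0) (\<lambda>(y, u). k y u)"
    and "\<And>y. y \<in> Y \<Longrightarrow> adm_set U f Y y \<noteq> {}"
  shows "(\<forall>T::nat. T \<ge> 1 \<longrightarrow> (\<forall>\<gamma> \<in> W_set U f Y.
            (\<integral>z. V_T U f k Y T (fst z) \<partial>\<gamma>) \<le> (\<integral>z. k (fst z) (snd z) \<partial>\<gamma>)))
       \<and> (\<forall>\<alpha>::real. 0 < \<alpha> \<and> \<alpha> < 1 \<longrightarrow> (\<forall>\<gamma> \<in> W_set U f Y.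
            (\<integral>z. h_disc U f k Y \<alpha> (fst z) \<partial>\<gamma>) \<le> (\<integral>z. k (fst z) (snd z) \<partial>\<gamma>)))"
proof -
  interpret ctrl Y U0 U f k by (unfold_locales) (use assms in auto)
  show ?thesis using int_VT int_h by blast
qed

end
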